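(* Let $n\ge1$, $H\in\mathbb{R}^{n\times n}$ symmetric positive semidefinite, $h\in\mathbb{R}^n$, $\lambda>0$, and let $(z^k,v^k,s^k)_{k\ge0}$ be the iterates of the predictor–corrector algorithm described in the context, started from a point $(z^0,v^0,s^0)\in\mathcal{N}(1/4)$. Then at every iteration $k$, \[ \Delta\mu_p\le\frac14\mu^k,\qquad \hat\mu^k\le\Big(1-\frac{\alpha^k}{2}\Big)^2\mu^k,\qquad \Delta\mu_c\le\Big(1-\frac{\alpha^k}{2}\Big)^2\frac{1}{16n}\mu^k . \]
   Context: Box-QP: $\min_{z}\frac12 z^\top Hz+z^\top h$ s.t. $-\mathbf{1}_n\le z\le\mathbf{1}_n$, objective scaled by $2\lambda$. Variables: $z\in\mathbb{R}^n$, $v=(\gamma,\theta)\in\mathbb{R}^{2n}$, $s=(\phi,\psi)\in\mathbb{R}^{2n}$. $\mathcal{F}^+=\{(z,v,s): 2\lambda Hz+2\lambda h+\gamma-\theta=0,\ z+\phi-\mathbf{1}_n=0,\ z-\psi+\mathbf{1}_n=0,\ (\gamma,\theta,\phi,\psi)>0\}$; for $\beta\in[0,1]$, $\mathcal{N}(\beta)=\{(z,v,s)\in\mathcal{F}^+:\|v\odot s-\mu\mathbf{1}_{2n}\|\le\beta\mu\}$, $\mu=\frac{v^\top s}{2n}$. With $\Omega=[I_n,-I_n]$, the Newton system at $(z,v,s)$ with parameters $\sigma,\mu$ is $(2\lambda H)\Delta z+\Omega\Delta v=0$, $\Omega^\top\Delta z+\Delta s=0$, $s\odot\Delta v+v\odot\Delta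 s=\sigma\mu\mathbf{1}_{2n}-v\odot s$. Algorithm, iteration $k$: set $\mu^k=\frac{(v^k)^\top s^k}{2n}$; let $(\Delta z_p,\Delta v_p,\Delta s_p)$ solve the Newton system at $(z^k,v^k,s^k)$ with $\sigma=0$, $\mu=\mu^k$; $\Delta\mu_p=\frac{\Delta v_p^\top\Delta s_p}{2n}$; $\alpha^k=\min\big(\frac12,\sqrt{\mu^k/(8\|\Delta v_p\odot\Delta s_p-\Delta\mu_p\mathbf{1}_{2n}\|)}\big)$ (square-root term read as $+\infty$ if the norm is $0$); $(\hat z^k,\hat v^k,\hat s^k)=(z^k,v^k,s^k)+\alpha^k(\Delta z_p,\Delta v_p,\Delta s_p)$; $\hat\mu^k=\frac{(\hat v^k)^\top\hat s^k}{2n}$; let $(\Delta z_c,\Delta v_c,\Delta s_c)$ solve the Newton system at $(\hat z^k,\hat v^k,\hat s^k)$ with $\sigma=1$, $\mu=\hat\mu^k$; $\Delta\mu_c=\frac{\Delta v_c^\top\Delta s_c}{2n}$; $(z^{k+1},v^{k+1},s^{k+1})=(\hat z^k,\hat v^k,\hat s^k)+(\Delta z_c,\Delta v_c,\Delta s_c)$. $\odot$ is the Hadamard product, $\|\cdot\|$ the Euclidean norm. *)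

theory Defs
  imports "HOL-Analysis.Analysis"
begin

text \<open>Vectors in R^n are real^'n; vectors in R^(2n) are real^('n::finite + 'n), where the
  component Inl i is the i-th entry of the first block (gamma resp. phi) and Inr i the
  i-th entry of the second block (theta resp. psi).\<close>

definition ones :: "real^'m" where
  "ones = (\<chi> j. 1)"

definition hadamard :: "real^'m \<Rightarrow> real^'m \<Rightarrow> real^'m" where
  "hadamard a b = (\<chi> j. a $ j * b $ j)"

definition Omega :: "real^('n::finite + 'n) \<Rightarrow> real^'n" where
  "Omega v = (\<chi> i. v $ Inl i - v $ Inr i)"

definition OmegaT :: "real^'n \<Rightarrow> real^('n::finite + 'n)" where
  "OmegaT z = (\<chi> j. case j of Inl i \<Rightarrow> z $ i | Inr i \<Rightarrow> - (z $ i))"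

definition dmu :: "real^('n::finite + 'n) \<Rightarrow> real^('n::finite + 'n) \<Rightarrow> real" where
  "dmu v s = (v \<bullet> s) / (2 * real CARD('n::finite))"

definition Fplus :: "real^'n::finite^'n \<Rightarrow> real^'n \<Rightarrow> real \<Rightarrow>
    ((real^'n) \<times> (real^('n::finite + 'n)) \<times> (real^('n + 'n))) set" where
  "Fplus H h lam = {(z, v, s).
      (2 * lam) *\<^sub>R (H *v z) + (2 * lam) *\<^sub>R h + Omega v = 0 \<and>
      (\<forall>i. z $ i + s $ Inl i - 1 = 0) \<and>
      (\<forall>i. z $ i - s $ Inr i + 1 = 0) \<and>
      (\<forall>j. v $ j > 0) \<and> (\<forall>j. s $ j > 0)}"

definition Nbhd :: "real^'n::finite^'n \<Rightarrow> real^'n \<Rightarrow> real \<Rightarrow> real \<Rightarrow>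
    ((real^'n) \<times> (real^('n::finite + 'n)) \<times> (real^('n + 'n))) set" where
  "Nbhd H h lam beta = {(z, v, s). (z, v, s) \<in> Fplus H h lam \<and>
      norm (hadamard v s - dmu v s *\<^sub>R ones) \<le> beta * dmu v s}"

definition newton_sol :: "real^'n::finite^'n \<Rightarrow> real \<Rightarrow>
    real^'n \<Rightarrow> real^('n::finite + 'n) \<Rightarrow> real^('n::finite + 'n) \<Rightarrow> real \<Rightarrow> real \<Rightarrow>
    real^'n \<Rightarrow> real^('n::finite + 'n) \<Rightarrow> real^('n::finite + 'n) \<Rightarrow> bool" where
  "newton_sol H lam z v s sig mu dz dv ds \<longleftrightarrow>
     (2 * lam) *\<^sub>R (H *v dz) + Omega dv = 0 \<and>
     OmegaT dz + ds = 0 \<and>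
     hadamard s dv + hadamard v ds = (sig * mu) *\<^sub>R ones - hadamard v s"

text \<open>step length alpha^k (square-root term is +infinity when the norm is 0)\<close>
definition step_alpha :: "real \<Rightarrow> real^('n::finite + 'n) \<Rightarrow> real^('n::finite + 'n) \<Rightarrow> real" where
  "step_alpha mu dvp dsp =
     (let d = norm (hadamard dvp dsp - dmu dvp dsp *\<^sub>R ones)
      in if d = 0 then 1/2 else min (1/2) (sqrt (mu / (8 * d))))"

end

theory Submission
  imports Defs
begin

lemma inner_sum: "(x::real^'m) \<bullet> y = (\<Sum>j\<in>UNIV. x$j * y$j)"
  by (simp add: inner_vec_def)

lemma norm_le_sq: "b \<ge> 0 \<Longrightarrow> norm (x::real^'m) \<le> b \<longleftrightarrow> (\<Sum>j\<in>UNIV. (x$j)^2) \<le> b^2"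
  using norm_le_square[of x b] by (simp add: inner_vec_def power2_eq_square)

lemma comp_le_norm: "\<bar>(x::real^'m) $ j\<bar> \<le> norm x"
  using component_le_norm_cart[of x j] by simp

lemma pos_line:
  fixes x y dx dy a :: real
  assumes "x > 0" "y > 0" "a \<ge> 0"
    and "\<And>t. 0 \<le> t \<Longrightarrow> t \<le> a \<Longrightarrow> (x + t*dx) * (y + t*dy) > 0"
  shows "x + a*dx > 0"
proof (rule ccontr)
  assume "\<not> x + a*dx > 0"
  hence h: "x + a*dx \<le> 0" by simp
  have "a > 0" using h assms(1,3) by (cases "a = 0") auto
  have "dx < 0" using h \<open>a>0\<close> assms(1) by (smt (verit) mult_nonneg_nonneg)
  define t0 where "t0 = - x / dx"
  have "t0 > 0" using \<open>dx<0\<close> assms(1) by (simp add: t0_def divide_pos_neg)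
  have "x + t0*dx = 0" using \<open>dx<0\<close> by (simp add: t0_def)
  have "t0 \<le> a" using h \<open>dx<0\<close> unfolding t0_def by (simp add: field_simps)
  from assms(4)[OF _ this] \<open>t0>0\<close> \<open>x + t0*dx = 0\<close> show False by simp
qed

lemma card_plus: "real CARD('n::finite + 'n) = 2 * real CARD('n)"
  by (simp add: card_sum)

lemma dmu_eq: "dmu (v::real^('n::finite+'n)) s = (v \<bullet> s) / real CARD('n + 'n)"
  by (simp add: dmu_def card_plus)

lemma newton_dot:
  fixes H :: "real^'n::finite^'n"
  assumes psdH: "\<forall>x. x \<bullet> (H *v x) \<ge> 0" and lam: "lam > 0"
    and ns: "newton_sol H lam z v s sig mu dz dv ds"
  shows "dv \<bullet> ds \<ge> 0"
proof -
  have e1: "Omega dv = - ((2*lam) *\<^sub>R (H *v dz))" using ns unfolding newton_sol_def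
    by (metis add.commute add_eq_0_iff)
  have e2: "ds = - OmegaT dz" using ns unfolding newton_sol_def
    by (metis add.commute add_eq_0_iff)
  have "dv \<bullet> OmegaT dz = Omega dv \<bullet> dz"
  proof -
    have "dv \<bullet> OmegaT dz = (\<Sum>j\<in>UNIV <+> UNIV. dv$j * OmegaT dz $ j)"
      by (simp add: inner_sum UNIV_Plus_UNIV)
    also have "\<dots> = (\<Sum>i\<in>UNIV. dv$Inl i * dz$i) + (\<Sum>i\<in>UNIV. dv$Inr i * (- dz$i))"
      by (subst sum.Plus) (auto simp: OmegaT_def)
    also have "\<dots> = (\<Sum>i\<in>UNIV. (dv$Inl i - dv$Inr i) * dz$i)"
      by (simp add: sum_subtractf sum_negf left_diff_distrib)
    also have "\<dots> = Omega dv \<bullet> dz" by (simp add: inner_sum Omega_def)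
    finally show ?thesis .
  qed
  hence "dv \<bullet> ds = (2*lam) * (dz \<bullet> (H *v dz))"
    using e1 e2 by (simp add: inner_commute)
  thus ?thesis using psdH lam by simp
qed

definition cent :: "real^'m::finite \<Rightarrow> real^'m \<Rightarrow> real \<Rightarrow> bool" where
  "cent v s beta \<longleftrightarrow> (\<forall>j. v$j > 0) \<and> (\<forall>j. s$j > 0) \<and>
     norm (hadamard v s - ((v \<bullet> s) / real CARD('m)) *\<^sub>R ones) \<le> beta * ((v \<bullet> s) / real CARD('m))"

lemma amgm: "(v::real) > 0 \<Longrightarrow> s > 0 \<Longrightarrow> 4 * (v * s) * (x * y) \<le> (s * x + v * y)^2"
proof -
  have "(s * x+v * y)^2 - 4 * (v * s) * (x * y) = (s * x - v * y)^2" by (simp add: power2_eq_square algebra_simps)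
  thus ?thesis by (smt (verit) zero_le_power2)
qed

lemma predictor:
  fixes v s a b :: "real^'m::finite"
  defines "N \<equiv> real CARD('m)"
  defines "\<mu> \<equiv> (v \<bullet> s) / N" and "\<Delta> \<equiv> (a \<bullet> b) / N"
  defines "d \<equiv> norm (hadamard a b - \<Delta> *\<^sub>R ones)"
  defines "\<alpha> \<equiv> (if d = 0 then 1/2 else min (1/2) (sqrt (\<mu> / (8 * d))))"
  assumes c: "cent v s (1/4)" and eq: "\<forall>j. s$j * a$j + v$j * b$j = - (v$j * s$j)" and ab: "a \<bullet> b \<ge> 0"
  shows "\<Delta> \<le> \<mu>/4" "(v + \<alpha> *\<^sub>R a) \<bullet> (s + \<alpha> *\<^sub>R b) / N \<le> (1-\<alpha>/2)^2 * \<mu>"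
    "cent (v + \<alpha> *\<^sub>R a) (s + \<alpha> *\<^sub>R b) (1/2)"
proof -
  have Npos: "N > 0" unfolding N_def by simp
  have vp: "\<And>j. v$j > 0" and sp: "\<And>j. s$j > 0" and cn: "norm (hadamard v s - \<mu> *\<^sub>R ones) \<le> 1/4 * \<mu>"
    using c unfolding cent_def \<mu>_def N_def by auto
  have pp: "\<And>j. v$j * s$j > 0" using vp sp by simp
  have "v \<bullet> s > 0" unfolding inner_sum by (rule sum_pos) (use pp in auto)
  hence mupos: "\<mu> > 0" using Npos unfolding \<mu>_def by simp
  have Dnn: "\<Delta> \<ge> 0" using ab Npos unfolding \<Delta>_def by simp
  have abj: "a$j * b$j \<le> v$j * s$j/4" for j
  proof -
    have "4 * (v$j * s$j) * (a$j * b$j) \<le> (v$j * s$j)^2" using amgm[OF vp[of j] sp[of j], of "a$j" "b$j"] eq by simp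
    hence "(v$j * s$j) * (4 * (a$j * b$j)) \<le> (v$j * s$j) * (v$j * s$j)" by (simp add: power2_eq_square algebra_simps)
    hence "4 * (a$j * b$j) \<le> v$j * s$j" using pp[of j] mult_le_cancel_left_pos by blast
    thus ?thesis by simp
  qed
  have "a \<bullet> b \<le> (v \<bullet> s)/4" unfolding inner_sum
    using sum_mono[of UNIV "\<lambda>j. a$j * b$j" "\<lambda>j. v$j * s$j/4", OF abj] by (simp add: sum_divide_distrib)
  thus D4: "\<Delta> \<le> \<mu>/4" unfolding \<Delta>_def \<mu>_def using Npos by (simp add: field_simps)
  have dnn: "d \<ge> 0" unfolding d_def by simp
  have a0: "\<alpha> \<ge> 0" and a12: "\<alpha> \<le> 1/2" unfolding \<alpha>_def using dnn mupos by auto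
  have ad: "\<alpha>^2 * d \<le> \<mu>/8"
  proof (cases "d = 0")
    case True thus ?thesis using mupos by simp
  next
    case False
    hence dp: "d > 0" using dnn by simp
    have "\<alpha> \<le> sqrt (\<mu> / (8 * d))" unfolding \<alpha>_def using False by simp
    hence "\<alpha>^2 \<le> (sqrt (\<mu> / (8 * d)))^2" using a0 by (simp add: power_mono)
    also have "\<dots> = \<mu> / (8 * d)" using mupos dp by simp
    finally have "\<alpha>^2 \<le> \<mu> / (8 * d)" .
    hence "\<alpha>^2 * (8 * d) \<le> \<mu>" using dp by (simp add: le_divide_eq)
    thus ?thesis by simp
  qed
  have key: "(\<forall>j. (v$j + t * a$j) * (s$j + t * b$j) > 0) \<and>
      norm (hadamard (v + t *\<^sub>R a) (s + t *\<^sub>R b) - ((v + t *\<^sub>R a) \<bullet> (s + t *\<^sub>R b) / N) *\<^sub>R ones)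
        \<le> 1/2 * ((v + t *\<^sub>R a) \<bullet> (s + t *\<^sub>R b) / N) \<and>
      (v + t *\<^sub>R a) \<bullet> (s + t *\<^sub>R b) / N = (1-t) * \<mu> + t^2 * \<Delta>"
    if t0: "0 \<le> t" and ta: "t \<le> \<alpha>" for t
  proof -
    have prod: "(v$j + t * a$j) * (s$j + t * b$j) = (1-t) * (v$j * s$j) + t^2 * (a$j * b$j)" for j
    proof -
      have "(v$j + t * a$j) * (s$j + t * b$j) = v$j * s$j + t * (s$j * a$j + v$j * b$j) + t^2 * (a$j * b$j)"
        by (simp add: power2_eq_square algebra_simps)
      also have "\<dots> = v$j * s$j + t * (- (v$j * s$j)) + t^2 * (a$j * b$j)"
        using eq by (simp only: spec[OF eq, of j])
      finally show ?thesis by (simp add: algebra_simps)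
    qed
    have dot: "(v + t *\<^sub>R a) \<bullet> (s + t *\<^sub>R b) = (1-t) * (v \<bullet> s) + t^2 * (a \<bullet> b)"
      unfolding inner_sum by (simp add: prod sum.distrib sum_distrib_left)
    define mt where "mt = (1-t) * \<mu> + t^2 * \<Delta>"
    have mt: "(v + t *\<^sub>R a) \<bullet> (s + t *\<^sub>R b) / N = mt"
      unfolding dot mt_def \<mu>_def \<Delta>_def by (simp add: add_divide_distrib)
    have hid: "hadamard (v + t *\<^sub>R a) (s + t *\<^sub>R b) - mt *\<^sub>R ones =
      (1-t) *\<^sub>R (hadamard v s - \<mu> *\<^sub>R ones) + t^2 *\<^sub>R (hadamard a b - \<Delta> *\<^sub>R ones)"
    unfolding vec_eq_iff proof (intro allI)
      fix i
      have L: "(hadamard (v + t *\<^sub>R a) (s + t *\<^sub>R b) - mt *\<^sub>R ones)$i = (v$i + t * a$i) * (s$i + t * b$i) - mt"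
        by (simp add: hadamard_def ones_def)
      have R: "((1-t) *\<^sub>R (hadamard v s - \<mu> *\<^sub>R ones) + t^2 *\<^sub>R (hadamard a b - \<Delta> *\<^sub>R ones))$i
          = (1-t) * (v$i * s$i - \<mu>) + t^2 * (a$i * b$i - \<Delta>)"
        by (simp add: hadamard_def ones_def)
      show "(hadamard (v + t *\<^sub>R a) (s + t *\<^sub>R b) - mt *\<^sub>R ones)$i =
        ((1-t) *\<^sub>R (hadamard v s - \<mu> *\<^sub>R ones) + t^2 *\<^sub>R (hadamard a b - \<Delta> *\<^sub>R ones))$i"
        by (simp only: L R prod[of i]) (simp add: mt_def algebra_simps)
    qed
    have t2: "t^2 \<le> \<alpha>^2" using t0 ta by (simp add: power_mono)
    have t1: "1 - t \<ge> 1/2" using ta a12 by simp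
    have "norm (hadamard (v + t *\<^sub>R a) (s + t *\<^sub>R b) - mt *\<^sub>R ones)
       \<le> (1-t) * norm (hadamard v s - \<mu> *\<^sub>R ones) + t^2 * d"
      unfolding hid
    proof -
      have "norm ((1-t) *\<^sub>R (hadamard v s - \<mu> *\<^sub>R ones) + t^2 *\<^sub>R (hadamard a b - \<Delta> *\<^sub>R ones))
        \<le> norm ((1-t) *\<^sub>R (hadamard v s - \<mu> *\<^sub>R ones)) + norm (t^2 *\<^sub>R (hadamard a b - \<Delta> *\<^sub>R ones))"
        by (rule norm_triangle_ineq)
      also have "\<dots> = (1-t) * norm (hadamard v s - \<mu> *\<^sub>R ones) + t^2 * d"
        using t1 by (simp add: d_def)
      finally show "norm ((1-t) *\<^sub>R (hadamard v s - \<mu> *\<^sub>R ones) + t^2 *\<^sub>R (hadamard a b - \<Delta> *\<^sub>R ones))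
        \<le> (1-t) * norm (hadamard v s - \<mu> *\<^sub>R ones) + t^2 * d" .
    qed
    also have "\<dots> \<le> (1-t) * (1/4 * \<mu>) + \<mu>/8"
    proof -
      have "(1-t) * norm (hadamard v s - \<mu> *\<^sub>R ones) \<le> (1-t) * (1/4 * \<mu>)"
        using cn t1 by (simp add: mult_left_mono)
      moreover have "t^2 * d \<le> \<mu>/8" using t2 dnn ad by (smt (verit) mult_right_mono)
      ultimately show ?thesis by simp
    qed
    finally have nb: "norm (hadamard (v + t *\<^sub>R a) (s + t *\<^sub>R b) - mt *\<^sub>R ones) \<le> (1-t) * (1/4 * \<mu>) + \<mu>/8" .
    have mtge: "mt \<ge> (1-t) * \<mu>" unfolding mt_def using Dnn by simp
    have pos: "(v$j + t * a$j) * (s$j + t * b$j) > 0" for j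
    proof -
      have "\<bar>(hadamard (v + t *\<^sub>R a) (s + t *\<^sub>R b) - mt *\<^sub>R ones) $ j\<bar> \<le> (1-t) * (1/4 * \<mu>) + \<mu>/8"
        using comp_le_norm nb order_trans by blast
      hence "\<bar>(v$j + t * a$j) * (s$j + t * b$j) - mt\<bar> \<le> (1-t) * (1/4 * \<mu>) + \<mu>/8"
        by (simp add: hadamard_def ones_def)
      moreover have "(1-t) * \<mu> \<ge> \<mu>/2" using mult_right_mono[OF t1, of \<mu>] mupos by simp
      ultimately show ?thesis using mtge mupos by linarith
    qed
    have "(1-t) * (1/4 * \<mu>) + \<mu>/8 \<le> 1/2 * mt"
    proof -
      have "(1-t) * \<mu> \<ge> \<mu>/2" using mult_right_mono[OF t1, of \<mu>] mupos by simp
      thus ?thesis using mtge by linarith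
    qed
    hence "norm (hadamard (v + t *\<^sub>R a) (s + t *\<^sub>R b) - mt *\<^sub>R ones) \<le> 1/2 * mt"
      using nb by linarith
    thus ?thesis unfolding mt using pos mt_def by auto
  qed
  from key[OF a0 order_refl] have K: "(\<forall>j. (v$j + \<alpha> * a$j) * (s$j + \<alpha> * b$j) > 0)"
    "norm (hadamard (v + \<alpha> *\<^sub>R a) (s + \<alpha> *\<^sub>R b) - ((v + \<alpha> *\<^sub>R a) \<bullet> (s + \<alpha> *\<^sub>R b) / N) *\<^sub>R ones)
        \<le> 1/2 * ((v + \<alpha> *\<^sub>R a) \<bullet> (s + \<alpha> *\<^sub>R b) / N)"
    "(v + \<alpha> *\<^sub>R a) \<bullet> (s + \<alpha> *\<^sub>R b) / N = (1-\<alpha>) * \<mu> + \<alpha>^2 * \<Delta>" by auto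
  have "(1-\<alpha>) * \<mu> + \<alpha>^2 * \<Delta> \<le> (1-\<alpha>) * \<mu> + \<alpha>^2 * (\<mu>/4)"
    using mult_left_mono[OF D4, of "\<alpha>^2"] by simp
  also have "\<dots> = (1-\<alpha>/2)^2 * \<mu>" by (simp add: power2_eq_square algebra_simps)
  finally show "(v + \<alpha> *\<^sub>R a) \<bullet> (s + \<alpha> *\<^sub>R b) / N \<le> (1-\<alpha>/2)^2 * \<mu>" using K(3) by simp
  have vpos: "(v + \<alpha> *\<^sub>R a)$j > 0" for j
    using pos_line[of "v$j" "s$j" \<alpha> "a$j" "b$j"] vp sp a0 key by auto
  have spos: "(s + \<alpha> *\<^sub>R b)$j > 0" for j
    using pos_line[of "s$j" "v$j" \<alpha> "b$j" "a$j"] vp sp a0 key by (auto simp: mult.commute)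
  show "cent (v + \<alpha> *\<^sub>R a) (s + \<alpha> *\<^sub>R b) (1/2)"
    unfolding cent_def using vpos spos K(2) by (simp add: N_def)
qed


lemma sq_le_sum_abs:
  fixes x :: "'m::finite \<Rightarrow> real"
  shows "(\<Sum>j\<in>UNIV. (x j)^2) \<le> (\<Sum>j\<in>UNIV. \<bar>x j\<bar>)^2"
proof -
  have "(x j)^2 \<le> \<bar>x j\<bar> * (\<Sum>i\<in>UNIV. \<bar>x i\<bar>)" for j
  proof -
    have "\<bar>x j\<bar> \<le> (\<Sum>i\<in>UNIV. \<bar>x i\<bar>)" by (rule member_le_sum) auto
    hence "\<bar>x j\<bar> * \<bar>x j\<bar> \<le> \<bar>x j\<bar> * (\<Sum>i\<in>UNIV. \<bar>x i\<bar>)" by (rule mult_left_mono) auto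
    moreover have "(x j)^2 = \<bar>x j\<bar> * \<bar>x j\<bar>" by (metis abs_mult_self_eq power2_eq_square)
    ultimately show ?thesis by simp
  qed
  hence "(\<Sum>j\<in>UNIV. (x j)^2) \<le> (\<Sum>j\<in>UNIV. \<bar>x j\<bar> * (\<Sum>i\<in>UNIV. \<bar>x i\<bar>))" by (rule sum_mono)
  also have "\<dots> = (\<Sum>j\<in>UNIV. \<bar>x j\<bar>)^2" by (simp add: sum_distrib_right power2_eq_square)
  finally show ?thesis .
qed

lemma sum_sq_centered:
  fixes x :: "'m::finite \<Rightarrow> real"
  defines "c \<equiv> (\<Sum>j\<in>UNIV. x j) / real CARD('m)"
  shows "(\<Sum>j\<in>UNIV. (x j - c)^2) \<le> (\<Sum>j\<in>UNIV. (x j)^2)"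
proof -
  have N: "real CARD('m) > 0" by simp
  have "(\<Sum>j\<in>UNIV. (x j - c)^2) = (\<Sum>j\<in>UNIV. (x j)^2) - 2 * c * (\<Sum>j\<in>UNIV. x j) + real CARD('m) * c^2"
  proof -
    have "(\<Sum>j\<in>UNIV. (x j - c)^2) = (\<Sum>j\<in>UNIV. (x j)^2 - (2 * c) * x j + c^2)"
      by (rule sum.cong) (simp_all add: power2_eq_square algebra_simps)
    also have "\<dots> = (\<Sum>j\<in>UNIV. (x j)^2) - (2 * c) * (\<Sum>j\<in>UNIV. x j) + real CARD('m) * c^2"
      by (simp add: sum.distrib sum_subtractf sum_distrib_left)
    finally show ?thesis by simp
  qed
  also have "(\<Sum>j\<in>UNIV. x j) = real CARD('m) * c" using N unfolding c_def by simp
  finally have "(\<Sum>j\<in>UNIV. (x j - c)^2) = (\<Sum>j\<in>UNIV. (x j)^2) - real CARD('m) * c^2"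
    by (simp add: power2_eq_square algebra_simps)
  thus ?thesis using N by simp
qed

lemma corrector:
  fixes v s a b :: "real^'m::finite"
  defines "N \<equiv> real CARD('m)"
  defines "\<mu> \<equiv> (v \<bullet> s) / N"
  assumes c: "cent v s (1/2)" and eq: "\<forall>j. s$j * a$j + v$j * b$j = \<mu> - v$j * s$j" and ab: "a \<bullet> b \<ge> 0"
  shows "(a \<bullet> b) / N \<le> \<mu> / (8 * N)" "cent (v + a) (s + b) (1/4)"
proof -
  have Npos: "N > 0" unfolding N_def by simp
  have vp: "\<And>j. v$j > 0" and sp: "\<And>j. s$j > 0" and cn: "norm (hadamard v s - \<mu> *\<^sub>R ones) \<le> 1/2 * \<mu>"
    using c unfolding cent_def \<mu>_def N_def by auto
  have pp: "\<And>j. v$j * s$j > 0" using vp sp by simp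
  have "v \<bullet> s > 0" unfolding inner_sum by (rule sum_pos) (use pp in auto)
  hence mupos: "\<mu> > 0" using Npos unfolding \<mu>_def by simp
  define r where "r j = \<mu> - v$j * s$j" for j
  have cj: "(hadamard v s - \<mu> *\<^sub>R ones)$j = - r j" for j by (simp add: hadamard_def ones_def r_def)
  have rsum: "(\<Sum>j\<in>UNIV. (r j)^2) \<le> (1/2 * \<mu>)^2"
  proof -
    have "(\<Sum>j\<in>UNIV. ((hadamard v s - \<mu> *\<^sub>R ones)$j)^2) \<le> (1/2 * \<mu>)^2"
      using cn norm_le_sq[of "1/2 * \<mu>" "hadamard v s - \<mu> *\<^sub>R ones"] mupos by linarith
    thus ?thesis by (simp only: cj power2_minus)
  qed
  have pge: "v$j * s$j \<ge> \<mu>/2" for j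
  proof -
    have "\<bar>- r j\<bar> \<le> 1/2 * \<mu>" using comp_le_norm[of "hadamard v s - \<mu> *\<^sub>R ones" j] cn cj[of j] by simp
    hence "\<bar>v$j * s$j - \<mu>\<bar> \<le> 1/2 * \<mu>" unfolding r_def by simp
    thus ?thesis by linarith
  qed
  have am: "4 * (v$j * s$j) * (a$j * b$j) \<le> (r j)^2" for j
    using amgm[OF vp[of j] sp[of j], of "a$j" "b$j"] eq unfolding r_def by simp
  have ab1: "2 * \<mu> * (a$j * b$j) \<le> (r j)^2" for j
  proof (cases "a$j * b$j \<ge> 0")
    case True
    have "2 * \<mu> \<le> 4 * (v$j * s$j)" using pge[of j] by linarith
    hence "2 * \<mu> * (a$j * b$j) \<le> 4 * (v$j * s$j) * (a$j * b$j)" using True by (rule mult_right_mono)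
    thus ?thesis using am[of j] by linarith
  next
    case False
    hence "2 * \<mu> * (a$j * b$j) \<le> 0" using mupos mult_pos_neg[of \<mu> "a$j * b$j"] by simp
    thus ?thesis by (smt (verit) zero_le_power2)
  qed
  have ab2: "\<mu> * (\<bar>a$j * b$j\<bar> + a$j * b$j) \<le> (r j)^2" for j
  proof (cases "a$j * b$j \<ge> 0")
    case True thus ?thesis using ab1[of j] by (simp add: algebra_simps)
  next
    case False thus ?thesis by simp
  qed
  have "2 * \<mu> * (a \<bullet> b) \<le> (\<Sum>j\<in>UNIV. (r j)^2)"
    unfolding inner_sum sum_distrib_left by (rule sum_mono) (rule ab1)
  hence "2 * \<mu> * (a \<bullet> b) \<le> \<mu> * (\<mu> / 4)" using rsum by (simp add: power2_eq_square)
  hence "2 * (a \<bullet> b) \<le> \<mu> / 4" using mupos by (simp add: mult.assoc)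
  hence abm: "a \<bullet> b \<le> \<mu> / 8" by simp
  thus "(a \<bullet> b) / N \<le> \<mu> / (8 * N)" using Npos by (simp add: field_simps)
  define S where "S = (\<Sum>j\<in>UNIV. \<bar>a$j * b$j\<bar>)"
  have "\<mu> * (S + a \<bullet> b) \<le> (\<Sum>j\<in>UNIV. (r j)^2)"
    unfolding inner_sum S_def sum.distrib[symmetric] sum_distrib_left by (rule sum_mono) (rule ab2)
  hence "\<mu> * (S + a \<bullet> b) \<le> \<mu> * (\<mu> / 4)" using rsum by (simp add: power2_eq_square)
  hence "S + a \<bullet> b \<le> \<mu> / 4" using mupos by (simp add: mult_le_cancel_left_pos)
  hence S4: "S \<le> \<mu> / 4" using ab by linarith
  have absj: "\<bar>a$j * b$j\<bar> \<le> S" for j unfolding S_def by (rule member_le_sum) auto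
  have seg: "(v$j + t * a$j) * (s$j + t * b$j) > 0" if "0 \<le> t" "t \<le> 1" for t j
  proof -
    have "(v$j + t * a$j) * (s$j + t * b$j) = v$j * s$j + t * (s$j * a$j + v$j * b$j) + t^2 * (a$j * b$j)"
      by (simp add: power2_eq_square algebra_simps)
    also have "\<dots> = v$j * s$j + t * (\<mu> - v$j * s$j) + t^2 * (a$j * b$j)"
      by (simp only: spec[OF eq, of j])
    also have "\<dots> = (1 - t) * (v$j * s$j) + t * \<mu> + t^2 * (a$j * b$j)"
      by (simp add: algebra_simps)
    finally have e: "(v$j + t * a$j) * (s$j + t * b$j) = (1 - t) * (v$j * s$j) + t * \<mu> + t^2 * (a$j * b$j)" .
    have "(1 - t) * (v$j * s$j) \<ge> (1 - t) * (\<mu>/2)" using pge[of j] that by (intro mult_left_mono) auto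
    moreover have "(1 - t) * (\<mu>/2) = \<mu>/2 - t * \<mu> / 2" by (simp add: field_simps)
    ultimately have f1: "(1 - t) * (v$j * s$j) \<ge> \<mu>/2 - t * \<mu> / 2" by linarith
    have f2: "t * \<mu> \<ge> 0" using that mupos by simp
    have t21: "t^2 \<le> 1" using that by (simp add: power_le_one)
    have "t^2 * \<bar>a$j * b$j\<bar> \<le> 1 * \<bar>a$j * b$j\<bar>" using t21 by (rule mult_right_mono) simp
    hence g: "t^2 * \<bar>a$j * b$j\<bar> \<le> \<mu> / 4" using absj[of j] S4 by linarith
    have "t^2 * (- \<bar>a$j * b$j\<bar>) \<le> t^2 * (a$j * b$j)" by (rule mult_left_mono) auto
    hence f3: "t^2 * (a$j * b$j) \<ge> - (\<mu> / 4)" using g by simp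
    show ?thesis unfolding e using f1 f2 f3 mupos by linarith
  qed
  have vpos: "(v + a)$j > 0" for j
    using pos_line[of "v$j" "s$j" 1 "a$j" "b$j"] vp sp seg by auto
  have spos: "(s + b)$j > 0" for j
    using pos_line[of "s$j" "v$j" 1 "b$j" "a$j"] vp sp seg by (auto simp: mult.commute)
  have pj: "(v$j + a$j) * (s$j + b$j) = \<mu> + a$j * b$j" for j
  proof -
    have "(v$j + a$j) * (s$j + b$j) = v$j * s$j + (s$j * a$j + v$j * b$j) + a$j * b$j"
      by (simp add: algebra_simps)
    thus ?thesis by (simp only: spec[OF eq, of j])
  qed
  define c where "c = (\<Sum>j\<in>UNIV. a$j * b$j) / N"
  have dotn: "(v + a) \<bullet> (s + b) / N = \<mu> + c"
    unfolding inner_sum c_def using Npos by (simp add: pj sum.distrib add_divide_distrib N_def)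
  have cnn: "c \<ge> 0" using ab Npos unfolding c_def inner_sum by simp
  have compn: "(hadamard (v + a) (s + b) - (\<mu> + c) *\<^sub>R ones)$j = a$j * b$j - c" for j
    by (simp add: hadamard_def ones_def pj)
  have "(\<Sum>j\<in>UNIV. (a$j * b$j - c)^2) \<le> (\<Sum>j\<in>UNIV. (a$j * b$j)^2)"
    using sum_sq_centered[of "\<lambda>j. a$j * b$j"] unfolding c_def N_def by simp
  also have "\<dots> \<le> S^2" unfolding S_def by (rule sq_le_sum_abs)
  also have "\<dots> \<le> (1/4 * (\<mu> + c))^2"
    using S4 cnn by (intro power_mono) (auto simp: S_def)
  finally have X: "(\<Sum>j\<in>UNIV. (a$j * b$j - c)^2) \<le> (1/4 * (\<mu> + c))^2" .
  have "(\<Sum>j\<in>UNIV. ((hadamard (v + a) (s + b) - (\<mu> + c) *\<^sub>R ones)$j)^2) \<le> (1/4 * (\<mu> + c))^2"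
    unfolding compn by (rule X)
  hence "norm (hadamard (v + a) (s + b) - (\<mu> + c) *\<^sub>R ones) \<le> 1/4 * (\<mu> + c)"
    by (subst norm_le_sq) (use mupos cnn in auto)
  thus "cent (v + a) (s + b) (1/4)"
    unfolding cent_def using vpos spos dotn by (simp add: N_def)
qed

theorem lemma4:
  fixes H :: "real^'n^'n" and h :: "real^'n" and lam :: real
    and z :: "nat \<Rightarrow> real^'n" and v s :: "nat \<Rightarrow> real^('n + 'n)"
    and dzp dzc :: "nat \<Rightarrow> real^'n" and dvp dsp dvc dsc :: "nat \<Rightarrow> real^('n + 'n)"
  assumes symH: "transpose H = H"
    and psdH: "\<forall>x. x \<bullet> (H *v x) \<ge> 0"
    and lam: "lam > 0"
    and start: "(z 0, v 0, s 0) \<in> Nbhd H h lam (1/4)"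
    and pred: "\<forall>k. newton_sol H lam (z k) (v k) (s k) 0 (dmu (v k) (s k))
                     (dzp k) (dvp k) (dsp k)"
    and corr: "\<forall>k. let a = step_alpha (dmu (v k) (s k)) (dvp k) (dsp k);
                       zh = z k + a *\<^sub>R dzp k; vh = v k + a *\<^sub>R dvp k; sh = s k + a *\<^sub>R dsp k
                   in newton_sol H lam zh vh sh 1 (dmu vh sh) (dzc k) (dvc k) (dsc k)
                      \<and> z (Suc k) = zh + dzc k \<and> v (Suc k) = vh + dvc k
                      \<and> s (Suc k) = sh + dsc k"
  shows "\<forall>k. let mu = dmu (v k) (s k); a = step_alpha mu (dvp k) (dsp k);
               vh = v k + a *\<^sub>R dvp k; sh = s k + a *\<^sub>R dsp k
           in dmu (dvp k) (dsp k) \<le> 1/4 * mu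
              \<and> dmu vh sh \<le> (1 - a/2)^2 * mu
              \<and> dmu (dvc k) (dsc k) \<le> (1 - a/2)^2 * (1 / (16 * real CARD('n))) * mu"
proof -
  have dm: "\<And>(x::real^('n+'n)) y. dmu x y = (x \<bullet> y) / real CARD('n+'n)" by (rule dmu_eq)
  have Nn: "real CARD('n + 'n) = 2 * real CARD('n)" by (rule card_plus)
  have step: "dmu (dvp k) (dsp k) \<le> 1/4 * dmu (v k) (s k)
     \<and> dmu (v k + step_alpha (dmu (v k) (s k)) (dvp k) (dsp k) *\<^sub>R dvp k)
            (s k + step_alpha (dmu (v k) (s k)) (dvp k) (dsp k) *\<^sub>R dsp k)
        \<le> (1 - step_alpha (dmu (v k) (s k)) (dvp k) (dsp k)/2)^2 * dmu (v k) (s k)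
     \<and> dmu (dvc k) (dsc k) \<le> (1 - step_alpha (dmu (v k) (s k)) (dvp k) (dsp k)/2)^2
            * (1 / (16 * real CARD('n))) * dmu (v k) (s k)
     \<and> cent (v (Suc k)) (s (Suc k)) (1/4)"
    if IH: "cent (v k) (s k) (1/4)" for k
  proof -
    define a where "a = step_alpha (dmu (v k) (s k)) (dvp k) (dsp k)"
    define zh where "zh = z k + a *\<^sub>R dzp k"
    define vh where "vh = v k + a *\<^sub>R dvp k"
    define sh where "sh = s k + a *\<^sub>R dsp k"
    have C: "newton_sol H lam zh vh sh 1 (dmu vh sh) (dzc k) (dvc k) (dsc k)"
      "v (Suc k) = vh + dvc k" "s (Suc k) = sh + dsc k"
      using spec[OF corr, of k] by (simp_all add: Let_def a_def vh_def sh_def zh_def)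
    have P: "newton_sol H lam (z k) (v k) (s k) 0 (dmu (v k) (s k)) (dzp k) (dvp k) (dsp k)"
      using pred by auto
    have eqp: "\<forall>j. s k $ j * dvp k $ j + v k $ j * dsp k $ j = - (v k $ j * s k $ j)"
    proof
      fix j
      have "(hadamard (s k) (dvp k) + hadamard (v k) (dsp k)) $ j = ((0 * dmu (v k) (s k)) *\<^sub>R ones - hadamard (v k) (s k)) $ j"
        using P unfolding newton_sol_def by simp
      thus "s k $ j * dvp k $ j + v k $ j * dsp k $ j = - (v k $ j * s k $ j)"
        by (simp add: hadamard_def ones_def)
    qed
    have abp: "dvp k \<bullet> dsp k \<ge> 0" by (rule newton_dot[OF psdH lam P])
    have aeq: "a = (if norm (hadamard (dvp k) (dsp k) - ((dvp k \<bullet> dsp k) / real CARD('n+'n)) *\<^sub>R ones) = 0 then 1/2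
        else min (1/2) (sqrt (((v k \<bullet> s k) / real CARD('n+'n)) / (8 * norm (hadamard (dvp k) (dsp k) - ((dvp k \<bullet> dsp k) / real CARD('n+'n)) *\<^sub>R ones)))))"
      unfolding a_def step_alpha_def Let_def dm ..
    note PR = predictor[OF IH eqp abp, folded aeq, folded vh_def sh_def, folded dm]
    have eqc: "\<forall>j. sh $ j * dvc k $ j + vh $ j * dsc k $ j = (vh \<bullet> sh) / real CARD('n+'n) - vh $ j * sh $ j"
    proof
      fix j
      have "(hadamard sh (dvc k) + hadamard vh (dsc k)) $ j = ((1 * dmu vh sh) *\<^sub>R ones - hadamard vh sh) $ j"
        using C(1) unfolding newton_sol_def by simp
      thus "sh $ j * dvc k $ j + vh $ j * dsc k $ j = (vh \<bullet> sh) / real CARD('n+'n) - vh $ j * sh $ j"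
        by (simp add: hadamard_def ones_def dm)
    qed
    have abc: "dvc k \<bullet> dsc k \<ge> 0" by (rule newton_dot[OF psdH lam C(1)])
    note CR = corrector[OF PR(3) eqc abc, folded dm]
    have n0: "real CARD('n) > 0" by simp
    have "dmu (dvc k) (dsc k) \<le> dmu vh sh / (16 * real CARD('n))"
      using CR(1) unfolding Nn by (simp add: mult.assoc)
    also have "\<dots> \<le> (1 - a/2)^2 * dmu (v k) (s k) / (16 * real CARD('n))"
      using PR(2) n0 by (simp add: divide_right_mono)
    finally have c3: "dmu (dvc k) (dsc k) \<le> (1 - a/2)^2 * (1 / (16 * real CARD('n))) * dmu (v k) (s k)"
      by simp
    show ?thesis using PR(1) PR(2) c3 CR(2) C(2,3) unfolding a_def[symmetric] vh_def[symmetric] sh_def[symmetric]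
      by simp
  qed
  have inv: "cent (v k) (s k) (1/4)" for k
  proof (induction k)
    case 0
    from start show ?case unfolding Nbhd_def Fplus_def cent_def dm by auto
  next
    case (Suc k)
    thus ?case using step by blast
  qed
  show ?thesis using step[OF inv] by (simp add: Let_def)
qed

end
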